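(* Let $(\mathbb{X},\mathcal{X})$ be a Polish space, $G_0$ a probability measure on $\mathbb{X}^2$ with marginals $G_{01},G_{02}$, and $\alpha_1,\alpha_2>0$. Let $G_i=\sum_{k\ge1}W_{ik}\delta_{\tilde\varphi_{ik}}$, $i=1,2$, where $(\tilde\varphi_{1k},\tilde\varphi_{2k})_{k\ge1}$ are i.i.d. with law $G_0$, independent of the weights, and $W_{ik}=S_{ik}\prod_{j<k}(1-S_{ij})$ with $(S_{1k},S_{2k})_{k\ge1}$ i.i.d. random vectors distributed as $(S_{11},S_{21})$. (a) If $(S_{11},S_{21})=(V_0V_1,V_0V_2)$ with $V_0,V_1,V_2$ independent, $V_0\sim Beta(1+\alpha_1,\alpha_2)$ and $V_1,V_2\sim Beta(1,\alpha_1)$, then $G_1$ and $G_2$ are (marginally) Dirichlet processes with the same precision parameter $\alpha_1+\alpha_2$ and base measures $G_{01}$ and $G_{02}$ respectively. (b) If $(S_{11},S_{21})=(V_0V_1,V_0)$ with $V_0,V_1$ independent, $V_0\sim Beta(1,\alpha_1)$ and $V_1\sim Beta(1+\alpha_1,\alpha_2)$, then $G_1$ is a Dirichlet process with precision parameter $\alpha_1+\alpha_2$ and base measure $G_{01}$, and $G_2$ is a Dirichlet process with precision parameter $\alpha_1$ and base measure $G_{02}$.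
   Context: A Dirichlet process $DP(\alpha,H)$ with precision $\alpha>0$ and base probability measure $H$ on $\mathbb{X}$ is the law of the random measure $\sum_{k\ge1}W_k\delta_{\xi_k}$ where $(\xi_k)$ are i.i.d. with law $H$, independent of $(W_k)$, and $W_k=S_k\prod_{j<k}(1-S_j)$ with $(S_j)$ i.i.d. $Beta(1,\alpha)$ (Sethuraman's stick-breaking representation). $\delta_x$ is the Dirac mass at $x$. *)

theory Defs
  imports "HOL-Probability.Probability"
begin

definition beta_density :: "real \<Rightarrow> real \<Rightarrow> real \<Rightarrow> real" where
  "beta_density a b x =
     indicator {0<..<1} x * x powr (a - 1) * (1 - x) powr (b - 1) / Beta a b"

definition beta_measure :: "real \<Rightarrow> real \<Rightarrow> real measure" where
  "beta_measure a b = density lborel (\<lambda>x. ennreal (beta_density a b x))"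

text \<open>Stick-breaking weights W_k = S_k prod_{j<k} (1 - S_j) (indices start at 0).\<close>
definition stick_weights :: "(nat \<Rightarrow> real) \<Rightarrow> nat \<Rightarrow> real" where
  "stick_weights s k = s k * (\<Prod>j<k. (1 - s j))"

definition discrete_rm :: "(nat \<Rightarrow> real) \<Rightarrow> (nat \<Rightarrow> 'a::topological_space) \<Rightarrow> 'a measure" where
  "discrete_rm w \<xi> =
     measure_of UNIV (sets borel) (\<lambda>A. (\<Sum>k. ennreal (w k) * indicator A (\<xi> k)))"

text \<open>Dirichlet process DP(alpha,H) (Sethuraman): law, as a random element of the
  Giry space of (sub)probability measures on the Borel sets, of sum_k W_k delta_{xi_k}
  with xi_k iid ~ H independent of S_j iid ~ Beta(1,alpha).\<close>
definition DP :: "real \<Rightarrow> 'a::topological_space measure \<Rightarrow> 'a measure measure" where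
  "DP \<alpha> H =
     distr ((\<Pi>\<^sub>M k\<in>(UNIV::nat set). beta_measure 1 \<alpha>) \<Otimes>\<^sub>M (\<Pi>\<^sub>M k\<in>(UNIV::nat set). H))
           (subprob_algebra borel)
           (\<lambda>(s, \<xi>). discrete_rm (stick_weights s) \<xi>)"

end

theory Submission
  imports Defs
begin

lemma distr_comp_pre:
  assumes X: "X \<in> measurable M K"
    and g: "\<And>A. A \<in> sets N \<Longrightarrow> g -` A \<inter> space K \<in> sets K"
  shows "distr M N (\<lambda>\<omega>. g (X \<omega>)) = distr (distr M K X) N g"
  unfolding distr_def
proof (simp, rule measure_of_eq)
  show "sets N \<subseteq> Pow (space N)" by (rule sets.space_closed)
next
  fix a assume "a \<in> sigma_sets (space N) (sets N)"
  then have a: "a \<in> sets N" by (simp add: sets.sigma_sets_eq)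
  have "emeasure (measure_of (space K) (sets K) (\<lambda>A. emeasure M (X -` A \<inter> space M))) (g -` a \<inter> space K)
      = emeasure (distr M K X) (g -` a \<inter> space K)" by (simp add: distr_def)
  also have "\<dots> = emeasure M (X -` (g -` a \<inter> space K) \<inter> space M)"
    using g[OF a] X by (rule emeasure_distr[rotated])
  also have "X -` (g -` a \<inter> space K) \<inter> space M = (\<lambda>\<omega>. g (X \<omega>)) -` a \<inter> space M"
    using measurable_space[OF X] by auto
  finally show "emeasure M ((\<lambda>\<omega>. g (X \<omega>)) -` a \<inter> space M) =
     emeasure (measure_of (space K) (sets K) (\<lambda>A. emeasure M (X -` A \<inter> space M))) (g -` a \<inter> space K)"
    by simp
qed

lemma space_discrete_rm[simp]: "space (discrete_rm w \<xi>) = UNIV"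
  by (simp add: discrete_rm_def space_measure_of_conv)

lemma sets_discrete_rm[simp]: "sets (discrete_rm w \<xi>) = sets borel"
  unfolding discrete_rm_def by (subst sets_measure_of) (auto simp: sets.sigma_sets_eq[of borel, simplified])

lemma emeasure_discrete_rm:
  fixes \<xi> :: "nat \<Rightarrow> 'a::topological_space"
  assumes A: "A \<in> sets borel"
  shows "emeasure (discrete_rm w \<xi>) A = (\<Sum>k. ennreal (w k) * indicator A (\<xi> k))"
  unfolding discrete_rm_def
proof (rule emeasure_measure_of_sigma[OF _ _ _ A])
  show "sigma_algebra UNIV (sets borel)"
    using sets.sigma_algebra_axioms[of borel] by simp
  show "positive (sets borel) (\<lambda>A. \<Sum>k. ennreal (w k) * indicator A (\<xi> k))"
    by (simp add: positive_def)
  show "countably_additive (sets borel) (\<lambda>A. \<Sum>k. ennreal (w k) * indicator A (\<xi> k))"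
  proof (rule countably_additiveI)
    fix A :: "nat \<Rightarrow> 'a set" assume "range A \<subseteq> sets borel" "disjoint_family A"
    have "(\<Sum>n. \<Sum>k. ennreal (w k) * indicator (A n) (\<xi> k))
        = (\<Sum>n. \<integral>\<^sup>+k. ennreal (w k) * indicator (A n) (\<xi> k) \<partial>count_space UNIV)"
      by (simp add: nn_integral_count_space_nat)
    also have "\<dots> = (\<integral>\<^sup>+k. (\<Sum>n. ennreal (w k) * indicator (A n) (\<xi> k)) \<partial>count_space UNIV)"
      by (rule nn_integral_suminf[symmetric]) simp
    also have "\<dots> = (\<integral>\<^sup>+k. ennreal (w k) * indicator (\<Union>n. A n) (\<xi> k) \<partial>count_space UNIV)"
      using suminf_indicator[OF \<open>disjoint_family A\<close>]
      by (simp add: ennreal_suminf_cmult)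
    also have "\<dots> = (\<Sum>k. ennreal (w k) * indicator (\<Union>n. A n) (\<xi> k))"
      by (simp add: nn_integral_count_space_nat)
    finally show "(\<Sum>n. \<Sum>k. ennreal (w k) * indicator (A n) (\<xi> k)) =
       (\<Sum>k. ennreal (w k) * indicator (\<Union>n. A n) (\<xi> k))" .
  qed
qed


lemma subprob_discrete_rm:
  fixes \<xi> :: "nat \<Rightarrow> 'a::topological_space"
  assumes "(\<Sum>k. ennreal (w k)) \<le> 1"
  shows "subprob_space (discrete_rm w \<xi>)"
  by (rule subprob_spaceI) (use assms in \<open>simp_all add: emeasure_discrete_rm\<close>)

lemma g_pre:
  fixes A :: "'b::topological_space measure set"
  defines "K0 \<equiv> (\<Pi>\<^sub>M k\<in>(UNIV::nat set). (borel::real measure)) \<Otimes>\<^sub>M (\<Pi>\<^sub>M k\<in>(UNIV::nat set). (borel::'b measure))"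
  assumes A: "A \<in> sets (subprob_algebra borel)"
  shows "(\<lambda>(s, \<xi>). discrete_rm (stick_weights s) \<xi>) -` A \<inter> space K0 \<in> sets K0"
proof -
  define sw where "sw x k = stick_weights (fst x) k" for x :: "(nat \<Rightarrow> real) \<times> (nat \<Rightarrow> 'b)" and k
  have m_sw[measurable]: "(\<lambda>x. sw x k) \<in> borel_measurable K0" for k
    unfolding sw_def stick_weights_def K0_def by measurable
  have m_snd[measurable]: "(\<lambda>x. snd x k) \<in> borel_measurable K0" for k
    unfolding K0_def by measurable
  define G where "G = {x\<in>space K0. (\<Sum>k. ennreal (sw x k)) \<le> 1}"
  have G[measurable]: "G \<in> sets K0" unfolding G_def by measurable
  define h where "h x = discrete_rm (\<lambda>k. if x \<in> G then sw x k else 0) (snd x)" for x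
  have h: "h \<in> measurable K0 (subprob_algebra borel)"
  proof (rule measurable_subprob_algebra)
    fix a assume "a \<in> space K0"
    show "subprob_space (h a)" unfolding h_def
    proof (rule subprob_discrete_rm)
      show "(\<Sum>k. ennreal (if a \<in> G then sw a k else 0)) \<le> 1"
        by (cases "a \<in> G") (simp add: G_def, simp)
    qed
    show "sets (h a) = sets borel" by (simp add: h_def)
  next
    fix B :: "'b set" assume B[measurable]: "B \<in> sets borel"
    have "(\<lambda>a. emeasure (h a) B) = (\<lambda>a. \<Sum>k. ennreal (if a \<in> G then sw a k else 0) * indicator B (snd a k))"
      by (simp add: h_def emeasure_discrete_rm)
    also have "\<dots> \<in> borel_measurable K0" by measurable
    finally show "(\<lambda>a. emeasure (h a) B) \<in> borel_measurable K0" .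
  qed
  have "(\<lambda>(s, \<xi>). discrete_rm (stick_weights s) \<xi>) -` A \<inter> space K0 = h -` A \<inter> space K0 \<inter> G"
  proof (intro set_eqI iffI)
    fix x assume x: "x \<in> (\<lambda>(s, \<xi>). discrete_rm (stick_weights s) \<xi>) -` A \<inter> space K0"
    obtain s \<xi> where xe: "x = (s, \<xi>)" by (cases x)
    have "discrete_rm (stick_weights s) \<xi> \<in> space (subprob_algebra borel)"
      using x sets.sets_into_space[OF A] xe by auto
    then have "subprob_space (discrete_rm (stick_weights s) \<xi>)" by (simp add: space_subprob_algebra)
    then have "emeasure (discrete_rm (stick_weights s) \<xi>) UNIV \<le> 1"
      using subprob_space.emeasure_space_le_1 by fastforce
    then have "x \<in> G" using x xe by (simp add: G_def sw_def emeasure_discrete_rm)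
    then show "x \<in> h -` A \<inter> space K0 \<inter> G" using x xe by (simp add: h_def sw_def)
  next
    fix x assume x: "x \<in> h -` A \<inter> space K0 \<inter> G"
    obtain s \<xi> where xe: "x = (s, \<xi>)" by (cases x)
    have "h x = discrete_rm (stick_weights s) \<xi>" using x xe by (simp add: h_def sw_def)
    then show "x \<in> (\<lambda>(s, \<xi>). discrete_rm (stick_weights s) \<xi>) -` A \<inter> space K0"
      using x xe by simp
  qed
  also have "\<dots> \<in> sets K0" by (rule sets.Int[OF measurable_sets[OF h A] G])
  finally show ?thesis .
qed

lemma distr_PiM_indep:
  fixes Y :: "nat \<Rightarrow> 'w \<Rightarrow> 'b::topological_space"
  assumes M: "prob_space M" and B: "prob_space B" "sets B = sets borel"
    and ind: "prob_space.indep_vars M (\<lambda>_. borel) Y UNIV"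
    and law: "\<And>k. distr M borel (Y k) = B"
    and meas: "\<And>k. Y k \<in> borel_measurable M"
  shows "distr M (\<Pi>\<^sub>M k\<in>(UNIV::nat set). borel) (\<lambda>\<omega> k. Y k \<omega>) = (\<Pi>\<^sub>M k\<in>(UNIV::nat set). B)"
proof -
  interpret M: prob_space M by fact
  interpret B': prob_space B by fact
  interpret P: product_prob_space "\<lambda>_. B" "UNIV::nat set"
    by (simp add: product_prob_space_def product_sigma_finite_def B prob_space_imp_sigma_finite product_prob_space_axioms_def)
  have Yv[measurable]: "(\<lambda>\<omega> k. Y k \<omega>) \<in> measurable M (\<Pi>\<^sub>M k\<in>(UNIV::nat set). borel)"
    using meas by (intro measurable_PiM_single') auto
  have setsP: "sets (\<Pi>\<^sub>M k\<in>(UNIV::nat set). B) = sets (\<Pi>\<^sub>M k\<in>(UNIV::nat set). (borel::'b measure))"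
    by (rule sets_PiM_cong) (auto simp: B)
  show ?thesis
  proof (rule P.PiM_eq)
    show "sets (distr M (\<Pi>\<^sub>M k\<in>(UNIV::nat set). borel) (\<lambda>\<omega> k. Y k \<omega>)) = sets (\<Pi>\<^sub>M k\<in>(UNIV::nat set). B)"
      using setsP by simp
  next
    fix J :: "nat set" and F assume J: "finite J" "J \<subseteq> UNIV" and F: "\<And>j. j \<in> J \<Longrightarrow> F j \<in> sets B"
    have Fb: "F j \<in> sets borel" if "j \<in> J" for j using F[OF that] B by simp
    have mset: "prod_emb UNIV (\<lambda>_. B) J (\<Pi>\<^sub>E j\<in>J. F j) \<in> sets (\<Pi>\<^sub>M k\<in>(UNIV::nat set). (borel::'b measure))"
      using sets_PiM_I[of J UNIV F "\<lambda>_. B"] J F setsP by auto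
    have pre: "(\<lambda>\<omega> k. Y k \<omega>) -` prod_emb UNIV (\<lambda>_. B) J (\<Pi>\<^sub>E j\<in>J. F j) \<inter> space M
        = (if J = {} then space M else (\<Inter>j\<in>J. Y j -` F j \<inter> space M))"
      using B(2)[THEN sets_eq_imp_space_eq]
      by (auto simp: prod_emb_def PiE_def extensional_def Pi_iff)
    have probY: "M.prob (Y j -` F j \<inter> space M) = measure B (F j)" if "j \<in> J" for j
    proof -
      have "measure B (F j) = measure (distr M borel (Y j)) (F j)" using law by simp
      also have "\<dots> = M.prob (Y j -` F j \<inter> space M)"
        using Fb[OF that] meas by (simp add: measure_distr)
      finally show ?thesis by simp
    qed
    have "emeasure (distr M (\<Pi>\<^sub>M k\<in>(UNIV::nat set). borel) (\<lambda>\<omega> k. Y k \<omega>)) (prod_emb UNIV (\<lambda>_. B) J (\<Pi>\<^sub>E j\<in>J. F j))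
        = emeasure M ((\<lambda>\<omega> k. Y k \<omega>) -` prod_emb UNIV (\<lambda>_. B) J (\<Pi>\<^sub>E j\<in>J. F j) \<inter> space M)"
      by (rule emeasure_distr[OF Yv mset])
    also have "\<dots> = (\<Prod>j\<in>J. emeasure B (F j))"
    proof (cases "J = {}")
      case True then show ?thesis using pre by (simp add: M.emeasure_space_1)
    next
      case False
      have "M.prob (\<Inter>j\<in>J. Y j -` F j \<inter> space M) = (\<Prod>j\<in>J. M.prob (Y j -` F j \<inter> space M))"
        using ind unfolding M.indep_vars_def2
        by (intro M.indep_setsD[of "\<lambda>i. {Y i -` A \<inter> space M |A. A \<in> sets borel}" UNIV]) (use False J Fb in auto)
      also have "\<dots> = (\<Prod>j\<in>J. measure B (F j))" using probY by simp
      finally have "emeasure M (\<Inter>j\<in>J. Y j -` F j \<inter> space M) = ennreal (\<Prod>j\<in>J. measure B (F j))"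
        by (simp add: M.emeasure_eq_measure)
      also have "\<dots> = (\<Prod>j\<in>J. emeasure B (F j))"
        by (simp add: prod_ennreal B'.emeasure_eq_measure)
      finally show ?thesis using pre False by simp
    qed
    finally show "emeasure (distr M (\<Pi>\<^sub>M k\<in>(UNIV::nat set). borel) (\<lambda>\<omega> k. Y k \<omega>)) (prod_emb UNIV (\<lambda>_. B) J (\<Pi>\<^sub>E j\<in>J. F j))
        = (\<Prod>j\<in>J. emeasure B (F j))" .
  qed
qed

lemma pair_law:
  fixes \<Phi> :: "nat \<Rightarrow> 'w \<Rightarrow> 'c::topological_space" and \<Sigma> :: "nat \<Rightarrow> 'w \<Rightarrow> 'd::topological_space"
    and f :: "'d \<Rightarrow> real" and h :: "'c \<Rightarrow> 'b::topological_space"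
  assumes M: "prob_space M"
    and mP: "\<And>k. \<Phi> k \<in> borel_measurable M" and mS: "\<And>k. \<Sigma> k \<in> borel_measurable M"
    and mf[measurable]: "f \<in> borel_measurable borel" and mh[measurable]: "h \<in> borel_measurable borel"
    and ind: "prob_space.indep_set M
         (sets (vimage_algebra (space M) (\<lambda>\<omega> k. \<Phi> k \<omega>) (\<Pi>\<^sub>M k\<in>(UNIV::nat set). (borel :: 'c measure))))
         (sets (vimage_algebra (space M) (\<lambda>\<omega> k. \<Sigma> k \<omega>) (\<Pi>\<^sub>M k\<in>(UNIV::nat set). (borel :: 'd measure))))"
  shows "distr M ((\<Pi>\<^sub>M k\<in>(UNIV::nat set). (borel::real measure)) \<Otimes>\<^sub>M (\<Pi>\<^sub>M k\<in>(UNIV::nat set). (borel::'b measure)))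
            (\<lambda>\<omega>. ((\<lambda>k. f (\<Sigma> k \<omega>)), (\<lambda>k. h (\<Phi> k \<omega>))))
       = distr M (\<Pi>\<^sub>M k\<in>(UNIV::nat set). (borel::real measure)) (\<lambda>\<omega> k. f (\<Sigma> k \<omega>))
         \<Otimes>\<^sub>M distr M (\<Pi>\<^sub>M k\<in>(UNIV::nat set). (borel::'b measure)) (\<lambda>\<omega> k. h (\<Phi> k \<omega>))"
proof -
  interpret prob_space M by fact
  let ?VP = "vimage_algebra (space M) (\<lambda>\<omega> k. \<Phi> k \<omega>) (\<Pi>\<^sub>M k\<in>(UNIV::nat set). (borel :: 'c measure))"
  let ?VS = "vimage_algebra (space M) (\<lambda>\<omega> k. \<Sigma> k \<omega>) (\<Pi>\<^sub>M k\<in>(UNIV::nat set). (borel :: 'd measure))"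
  have Pv[measurable]: "(\<lambda>\<omega> k. \<Phi> k \<omega>) \<in> measurable M (\<Pi>\<^sub>M k\<in>(UNIV::nat set). borel)"
    using mP by (intro measurable_PiM_single') auto
  have Sv[measurable]: "(\<lambda>\<omega> k. \<Sigma> k \<omega>) \<in> measurable M (\<Pi>\<^sub>M k\<in>(UNIV::nat set). borel)"
    using mS by (intro measurable_PiM_single') auto
  have pmf[measurable]: "(\<lambda>s k. f (s k)) \<in> measurable (\<Pi>\<^sub>M k\<in>(UNIV::nat set). (borel :: 'd measure)) (\<Pi>\<^sub>M k\<in>(UNIV::nat set). borel)"
    by (intro measurable_PiM_single') auto
  have pmh[measurable]: "(\<lambda>s k. h (s k)) \<in> measurable (\<Pi>\<^sub>M k\<in>(UNIV::nat set). (borel :: 'c measure)) (\<Pi>\<^sub>M k\<in>(UNIV::nat set). borel)"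
    by (intro measurable_PiM_single') auto
  have Yv[measurable]: "(\<lambda>\<omega> k. f (\<Sigma> k \<omega>)) \<in> measurable M (\<Pi>\<^sub>M k\<in>(UNIV::nat set). (borel::real measure))"
    by measurable
  have Zv[measurable]: "(\<lambda>\<omega> k. h (\<Phi> k \<omega>)) \<in> measurable M (\<Pi>\<^sub>M k\<in>(UNIV::nat set). (borel::'b measure))"
    by measurable
  have inS: "(\<lambda>\<omega> k. f (\<Sigma> k \<omega>)) -` A \<inter> space M \<in> sets ?VS" if A: "A \<in> sets (\<Pi>\<^sub>M k\<in>(UNIV::nat set). (borel::real measure))" for A
  proof -
      have "(\<lambda>s k. f (s k)) -` A \<inter> space (\<Pi>\<^sub>M k\<in>(UNIV::nat set). (borel :: 'd measure)) \<in> sets (\<Pi>\<^sub>M k\<in>(UNIV::nat set). (borel :: 'd measure))"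
        using A by (rule measurable_sets[OF pmf])
      then have "(\<lambda>\<omega> k. \<Sigma> k \<omega>) -` ((\<lambda>s k. f (s k)) -` A \<inter> space (\<Pi>\<^sub>M k\<in>(UNIV::nat set). (borel :: 'd measure))) \<inter> space M \<in> sets ?VS"
        by (rule in_vimage_algebra)
      then show "(\<lambda>\<omega> k. f (\<Sigma> k \<omega>)) -` A \<inter> space M \<in> sets ?VS"
        by (simp add: space_PiM vimage_def)
  qed
  have inP: "(\<lambda>\<omega> k. h (\<Phi> k \<omega>)) -` A \<inter> space M \<in> sets ?VP" if A: "A \<in> sets (\<Pi>\<^sub>M k\<in>(UNIV::nat set). (borel::'b measure))" for A
  proof -
      have "(\<lambda>s k. h (s k)) -` A \<inter> space (\<Pi>\<^sub>M k\<in>(UNIV::nat set). (borel :: 'c measure)) \<in> sets (\<Pi>\<^sub>M k\<in>(UNIV::nat set). (borel :: 'c measure))"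
        using A by (rule measurable_sets[OF pmh])
      then have "(\<lambda>\<omega> k. \<Phi> k \<omega>) -` ((\<lambda>s k. h (s k)) -` A \<inter> space (\<Pi>\<^sub>M k\<in>(UNIV::nat set). (borel :: 'c measure))) \<inter> space M \<in> sets ?VP"
        by (rule in_vimage_algebra)
      then show "(\<lambda>\<omega> k. h (\<Phi> k \<omega>)) -` A \<inter> space M \<in> sets ?VP"
        by (simp add: space_PiM vimage_def)
  qed
  show ?thesis
  proof (rule pair_measure_eqI[symmetric])
    show "sigma_finite_measure (distr M (\<Pi>\<^sub>M k\<in>(UNIV::nat set). (borel::real measure)) (\<lambda>\<omega> k. f (\<Sigma> k \<omega>)))"
      by (intro prob_space_imp_sigma_finite prob_space_distr Yv)
    show "sigma_finite_measure (distr M (\<Pi>\<^sub>M k\<in>(UNIV::nat set). (borel::'b measure)) (\<lambda>\<omega> k. h (\<Phi> k \<omega>)))"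
      by (intro prob_space_imp_sigma_finite prob_space_distr Zv)
    show "sets (distr M (\<Pi>\<^sub>M k\<in>(UNIV::nat set). (borel::real measure)) (\<lambda>\<omega> k. f (\<Sigma> k \<omega>))
         \<Otimes>\<^sub>M distr M (\<Pi>\<^sub>M k\<in>(UNIV::nat set). (borel::'b measure)) (\<lambda>\<omega> k. h (\<Phi> k \<omega>))) =
       sets (distr M ((\<Pi>\<^sub>M k\<in>(UNIV::nat set). (borel::real measure)) \<Otimes>\<^sub>M (\<Pi>\<^sub>M k\<in>(UNIV::nat set). (borel::'b measure)))
            (\<lambda>\<omega>. ((\<lambda>k. f (\<Sigma> k \<omega>)), (\<lambda>k. h (\<Phi> k \<omega>)))))"
      by simp
  next
    fix A B
    assume A: "A \<in> sets (distr M (\<Pi>\<^sub>M k\<in>(UNIV::nat set). (borel::real measure)) (\<lambda>\<omega> k. f (\<Sigma> k \<omega>)))"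
      and B: "B \<in> sets (distr M (\<Pi>\<^sub>M k\<in>(UNIV::nat set). (borel::'b measure)) (\<lambda>\<omega> k. h (\<Phi> k \<omega>)))"
    then have A': "A \<in> sets (\<Pi>\<^sub>M k\<in>(UNIV::nat set). (borel::real measure))"
      and B': "B \<in> sets (\<Pi>\<^sub>M k\<in>(UNIV::nat set). (borel::'b measure))" by auto
    have eq: "(\<lambda>\<omega>. ((\<lambda>k. f (\<Sigma> k \<omega>)), (\<lambda>k. h (\<Phi> k \<omega>)))) -` (A \<times> B) \<inter> space M
      = ((\<lambda>\<omega> k. h (\<Phi> k \<omega>)) -` B \<inter> space M) \<inter> ((\<lambda>\<omega> k. f (\<Sigma> k \<omega>)) -` A \<inter> space M)" by auto
    have "emeasure (distr M ((\<Pi>\<^sub>M k\<in>(UNIV::nat set). (borel::real measure)) \<Otimes>\<^sub>M (\<Pi>\<^sub>M k\<in>(UNIV::nat set). (borel::'b measure)))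
            (\<lambda>\<omega>. ((\<lambda>k. f (\<Sigma> k \<omega>)), (\<lambda>k. h (\<Phi> k \<omega>))))) (A \<times> B)
       = emeasure M (((\<lambda>\<omega> k. h (\<Phi> k \<omega>)) -` B \<inter> space M) \<inter> ((\<lambda>\<omega> k. f (\<Sigma> k \<omega>)) -` A \<inter> space M))"
      using A' B' by (subst emeasure_distr) (auto simp: eq[symmetric])
    also have "\<dots> = ennreal (prob ((\<lambda>\<omega> k. h (\<Phi> k \<omega>)) -` B \<inter> space M) * prob ((\<lambda>\<omega> k. f (\<Sigma> k \<omega>)) -` A \<inter> space M))"
      using indep_setD[OF ind inP[OF B'] inS[OF A']] by (simp add: emeasure_eq_measure)
    also have "\<dots> = emeasure (distr M (\<Pi>\<^sub>M k\<in>(UNIV::nat set). (borel::real measure)) (\<lambda>\<omega> k. f (\<Sigma> k \<omega>))) A *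
          emeasure (distr M (\<Pi>\<^sub>M k\<in>(UNIV::nat set). (borel::'b measure)) (\<lambda>\<omega> k. h (\<Phi> k \<omega>))) B"
      using A' B' by (simp add: emeasure_distr emeasure_eq_measure ennreal_mult' mult.commute)
    finally show "emeasure (distr M (\<Pi>\<^sub>M k\<in>(UNIV::nat set). (borel::real measure)) (\<lambda>\<omega> k. f (\<Sigma> k \<omega>))) A *
          emeasure (distr M (\<Pi>\<^sub>M k\<in>(UNIV::nat set). (borel::'b measure)) (\<lambda>\<omega> k. h (\<Phi> k \<omega>))) B =
       emeasure (distr M ((\<Pi>\<^sub>M k\<in>(UNIV::nat set). (borel::real measure)) \<Otimes>\<^sub>M (\<Pi>\<^sub>M k\<in>(UNIV::nat set). (borel::'b measure)))
            (\<lambda>\<omega>. ((\<lambda>k. f (\<Sigma> k \<omega>)), (\<lambda>k. h (\<Phi> k \<omega>))))) (A \<times> B)" by simp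
  qed
qed

lemma Beta_pos': "a > 0 \<Longrightarrow> b > 0 \<Longrightarrow> Beta a b > (0::real)"
  by (simp add: Beta_def)

lemma beta_int:
  fixes a b :: real assumes a: "a > 0" and b: "b > 0"
  shows "(\<integral>\<^sup>+u. ennreal (indicator {0<..<1} u * u powr (a - 1) * (1 - u) powr (b - 1)) \<partial>lborel) = ennreal (Beta a b)"
proof (rule nn_integral_has_integral_lborel)
  show "(\<lambda>u. indicator {0<..<1} u * u powr (a - 1) * (1 - u) powr (b - 1)) \<in> borel_measurable borel"
    by measurable
  show "0 \<le> indicator {0<..<1} u * u powr (a - 1) * (1 - u) powr (b - 1)" for u :: real
    by (simp add: indicator_def)
  have "((\<lambda>t. t powr (a - 1) * (1 - t) powr (b - 1)) has_integral Beta a b) {0<..<1}"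
    using has_integral_Beta_real[OF a b] by (simp add: has_integral_Icc_iff_Ioo)
  then have "((\<lambda>u. if u \<in> {0<..<1} then u powr (a - 1) * (1 - u) powr (b - 1) else 0) has_integral Beta a b) UNIV"
    by (simp only: has_integral_restrict_UNIV)
  moreover have "(\<lambda>u. if u \<in> {0<..<1} then u powr (a - 1) * (1 - u) powr (b - 1) else 0)
      = (\<lambda>u. indicator {0<..<1} u * u powr (a - 1) * (1 - u) powr (b - 1))"
    by (auto simp: indicator_def fun_eq_iff)
  ultimately show "((\<lambda>u. indicator {0<..<1} u * u powr (a - 1) * (1 - u) powr (b - 1)) has_integral Beta a b) UNIV"
    by simp
qed

lemma beta_density_eq:
  "ennreal (beta_density a b x) = ennreal (1 / Beta a b) * ennreal (indicator {0<..<1} x * x powr (a - 1) * (1 - x) powr (b - 1))"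
  if "Beta a b > 0"
  using that by (simp add: beta_density_def indicator_def ennreal_mult'[symmetric])

lemma sets_beta[simp]: "sets (beta_measure a b) = sets borel"
  by (simp add: beta_measure_def)

lemma space_beta[simp]: "space (beta_measure a b) = UNIV"
  by (simp add: beta_measure_def)

lemma beta_density_meas[measurable]: "beta_density a b \<in> borel_measurable borel"
  unfolding beta_density_def by measurable

lemma prob_space_beta:
  assumes a: "a > 0" and b: "b > 0"
  shows "prob_space (beta_measure a b)"
proof (rule prob_spaceI)
  have B: "Beta a b > 0" using Beta_pos'[OF a b] .
  have "emeasure (beta_measure a b) (space (beta_measure a b))
      = (\<integral>\<^sup>+x. ennreal (beta_density a b x) \<partial>lborel)"
    by (simp add: beta_measure_def emeasure_density)
  also have "\<dots> = (\<integral>\<^sup>+x. ennreal (1 / Beta a b) * ennreal (indicator {0<..<1} x * x powr (a - 1) * (1 - x) powr (b - 1)) \<partial>lborel)"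
    using B by (simp add: beta_density_eq)
  also have "\<dots> = ennreal (1 / Beta a b) * ennreal (Beta a b)"
    by (subst nn_integral_cmult) (auto simp: beta_int[OF a b])
  also have "\<dots> = 1" using B by (simp add: ennreal_mult'[symmetric])
  finally show "emeasure (beta_measure a b) (space (beta_measure a b)) = 1" .
qed

lemma shifted_beta_int:
  fixes a b t :: real assumes a: "a > 0" and b: "b > 0" and t: "0 \<le> t" "t < 1"
  shows "(\<integral>\<^sup>+x. ennreal (indicator {t<..<1} x * (x - t) powr (a - 1) * (1 - x) powr (b - 1)) \<partial>lborel)
     = ennreal ((1 - t) powr (a + b - 1) * Beta a b)"
proof -
  let ?f = "\<lambda>x. ennreal (indicator {t<..<1} x * (x - t) powr (a - 1) * (1 - x) powr (b - 1))"
  have c: "1 - t \<noteq> 0" "1 - t > 0" using t by auto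
  have "(\<integral>\<^sup>+x. ?f x \<partial>lborel) = \<bar>1 - t\<bar> * (\<integral>\<^sup>+u. ?f (t + (1 - t) * u) \<partial>lborel)"
    by (rule nn_integral_real_affine) (use c in auto)
  also have "(\<lambda>u. ?f (t + (1 - t) * u)) = (\<lambda>u. ennreal ((1 - t) powr (a + b - 2)) * ennreal (indicator {0<..<1} u * u powr (a - 1) * (1 - u) powr (b - 1)))"
  proof
    fix u :: real
    have iff: "t + (1 - t) * u \<in> {t<..<1} \<longleftrightarrow> u \<in> {0<..<1}"
    proof -
      have "t < t + (1 - t) * u \<longleftrightarrow> 0 < u" using c by (simp add: zero_less_mult_iff)
      moreover have "t + (1 - t) * u < 1 \<longleftrightarrow> u < 1"
      proof -
        have "t + (1 - t) * u < 1 \<longleftrightarrow> (1 - t) * u < (1 - t) * 1" by (simp add: algebra_simps)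
        also have "\<dots> \<longleftrightarrow> u < 1" using c by (simp add: mult_less_cancel_left)
        finally show ?thesis .
      qed
      ultimately show ?thesis by auto
    qed
    show "?f (t + (1 - t) * u) = ennreal ((1 - t) powr (a + b - 2)) * ennreal (indicator {0<..<1} u * u powr (a - 1) * (1 - u) powr (b - 1))"
    proof (cases "u \<in> {0<..<1}")
      case True
      have e1: "t + (1 - t) * u - t = (1 - t) * u" by simp
      have e2: "1 - (t + (1 - t) * u) = (1 - t) * (1 - u)" by (simp add: algebra_simps)
      have "(1 - t) powr (a - 1) * (1 - t) powr (b - 1) = (1 - t) powr (a + b - 2)"
        by (simp add: powr_add[symmetric])
      have "((1 - t) * u) powr (a - 1) * ((1 - t) * (1 - u)) powr (b - 1)
          = (1 - t) powr (a - 1) * u powr (a - 1) * ((1 - t) powr (b - 1) * (1 - u) powr (b - 1))"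
        by (simp only: powr_mult)
      also have "\<dots> = ((1 - t) powr (a - 1) * (1 - t) powr (b - 1)) * (u powr (a - 1) * (1 - u) powr (b - 1))"
        by (simp only: mult_ac)
      finally have "((1 - t) * u) powr (a - 1) * ((1 - t) * (1 - u)) powr (b - 1)
          = (1 - t) powr (a + b - 2) * (u powr (a - 1) * (1 - u) powr (b - 1))"
        using \<open>(1 - t) powr (a - 1) * (1 - t) powr (b - 1) = (1 - t) powr (a + b - 2)\<close> by simp
      then show ?thesis using True iff
        by (simp add: e1 e2 indicator_def ennreal_mult'[symmetric])
    next
      case False
      then have "t + (1 - t) * u \<notin> {t<..<1}" using iff by blast
      then have "indicator {t<..<1} (t + (1 - t) * u) = (0::real)" "indicator {0<..<1} u = (0::real)"
        using False by (auto simp: indicator_def)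
      then show ?thesis by simp
    qed
  qed
  also have "(\<integral>\<^sup>+u. ennreal ((1 - t) powr (a + b - 2)) * ennreal (indicator {0<..<1} u * u powr (a - 1) * (1 - u) powr (b - 1)) \<partial>lborel)
      = ennreal ((1 - t) powr (a + b - 2)) * ennreal (Beta a b)"
    by (subst nn_integral_cmult) (auto simp: beta_int[OF a b])
  also have "ennreal \<bar>1 - t\<bar> * (ennreal ((1 - t) powr (a + b - 2)) * ennreal (Beta a b))
      = ennreal ((1 - t) powr (a + b - 1) * Beta a b)"
  proof -
    have "\<bar>1 - t\<bar> * (1 - t) powr (a + b - 2) = (1 - t) powr (a + b - 1)"
      using c powr_mult_base[of "1 - t" "a + b - 2"] by simp
    moreover have "Beta a b \<ge> 0" using Beta_pos'[OF a b] by simp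
    ultimately show ?thesis
      by (simp add: ennreal_mult'[symmetric] ennreal_mult''[symmetric] mult.assoc[symmetric])
  qed
  finally show ?thesis .
qed

definition surv :: "real \<Rightarrow> real \<Rightarrow> ennreal" where
  "surv c t = ennreal (if t < 0 then 1 else if t < 1 then (1 - t) powr c else 0)"

lemma shifted_beta_int1:
  fixes c s :: real assumes c: "c > 0" and s: "0 \<le> s" "s < 1"
  shows "(\<integral>\<^sup>+x. ennreal (indicator {s<..<1} x * (1 - x) powr (c - 1)) \<partial>lborel) = ennreal ((1 - s) powr (1 + c - 1) * Beta 1 c)"
proof -
  have "(\<integral>\<^sup>+x. ennreal (indicator {s<..<1} x * (1 - x) powr (c - 1)) \<partial>lborel)
      = (\<integral>\<^sup>+x. ennreal (indicator {s<..<1} x * (x - s) powr (1 - 1) * (1 - x) powr (c - 1)) \<partial>lborel)"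
    by (rule nn_integral_cong) (auto simp: indicator_def)
  also have "\<dots> = ennreal ((1 - s) powr (1 + c - 1) * Beta 1 c)"
    by (rule shifted_beta_int) (use c s in auto)
  finally show ?thesis .
qed

lemma surv_beta1:
  fixes c s :: real assumes c: "c > 0"
  shows "emeasure (beta_measure 1 c) {s<..} = surv c s"
proof -
  have B: "Beta 1 c > 0" using Beta_pos'[of 1 c] c by simp
  interpret P: prob_space "beta_measure 1 c" using prob_space_beta[of 1 c] c by simp
  have E: "emeasure (beta_measure 1 c) {s<..} = (\<integral>\<^sup>+x. ennreal (beta_density 1 c x) * indicator {s<..} x \<partial>lborel)"
    by (simp add: beta_measure_def emeasure_density)
  show ?thesis
  proof (cases "s < 0")
    case True
    have "(\<integral>\<^sup>+x. ennreal (beta_density 1 c x) * indicator {s<..} x \<partial>lborel) = (\<integral>\<^sup>+x. ennreal (beta_density 1 c x) \<partial>lborel)"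
    proof (rule nn_integral_cong)
      fix x :: real
      show "ennreal (beta_density 1 c x) * indicator {s<..} x = ennreal (beta_density 1 c x)"
        using True by (cases "s < x") (auto simp: beta_density_def indicator_def)
    qed
    also have "\<dots> = emeasure (beta_measure 1 c) (space (beta_measure 1 c))"
      by (simp add: beta_measure_def emeasure_density)
    also have "\<dots> = 1" by (rule P.emeasure_space_1)
    finally show ?thesis using E True by (simp add: surv_def)
  next
    case False
    show ?thesis
    proof (cases "s < 1")
      case False
      have "(\<lambda>x. ennreal (beta_density 1 c x) * indicator {s<..} x) = (\<lambda>x. 0)"
      proof
        fix x :: real
        show "ennreal (beta_density 1 c x) * indicator {s<..} x = 0"
          using False by (cases "s < x") (auto simp: beta_density_def indicator_def)
      qed
      then show ?thesis using E False by (simp add: surv_def)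
    next
      case True
      have s: "0 \<le> s" "s < 1" using \<open>\<not> s < 0\<close> True by auto
      have "(\<integral>\<^sup>+x. ennreal (beta_density 1 c x) * indicator {s<..} x \<partial>lborel)
          = (\<integral>\<^sup>+x. ennreal (1 / Beta 1 c) * ennreal (indicator {s<..<1} x * (1 - x) powr (c - 1)) \<partial>lborel)"
      proof (rule nn_integral_cong)
        fix x :: real
        show "ennreal (beta_density 1 c x) * indicator {s<..} x =
          ennreal (1 / Beta 1 c) * ennreal (indicator {s<..<1} x * (1 - x) powr (c - 1))"
        proof (cases "s < x \<and> x < 1")
          case True
          then show ?thesis using s B
            by (simp add: beta_density_def indicator_def ennreal_mult'[symmetric])
        next
          case False
          then show ?thesis using s
            by (auto simp: beta_density_def indicator_def)
        qed
      qed
      also have "\<dots> = ennreal (1 / Beta 1 c) * ennreal ((1 - s) powr (1 + c - 1) * Beta 1 c)"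
        by (subst nn_integral_cmult) (auto simp: shifted_beta_int1[OF c s])
      also have "\<dots> = ennreal ((1 - s) powr c)"
        using B by (simp add: ennreal_mult'[symmetric])
      finally show ?thesis using E s by (simp add: surv_def)
    qed
  qed
qed

lemma beta1_ident:
  fixes Q :: "real measure" and c :: real
  assumes c: "c > 0" and Q: "prob_space Q" "sets Q = sets borel"
    and eq: "\<And>t. emeasure Q {t<..} = surv c t"
  shows "Q = beta_measure 1 c"
proof (rule cdf_unique)
  show rQ: "real_distribution Q" using Q by (simp add: real_distribution_def real_distribution_axioms_def)
  show rB: "real_distribution (beta_measure 1 c)"
    using prob_space_beta[of 1 c] c by (simp add: real_distribution_def real_distribution_axioms_def)
  have cdf: "cdf N t = 1 - enn2real (emeasure N {t<..})" if "real_distribution N" for N t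
  proof -
    interpret real_distribution N by fact
    have "{..t} = space N - {t<..}" by auto
    have sp: "space N = UNIV" using events_eq_borel by (metis sets_eq_imp_space_eq space_borel)
    have "measure N {..t} = 1 - measure N {t<..}"
      using prob_compl[of "{t<..}"] \<open>{..t} = space N - {t<..}\<close> by simp
    then show ?thesis by (simp add: cdf_def measure_def)
  qed
  show "cdf Q = cdf (beta_measure 1 c)"
    by (rule ext) (simp add: cdf[OF rQ] cdf[OF rB] eq surv_beta1[OF c])
qed

lemma set_mult_gt: "x > 0 \<Longrightarrow> {y. t < x * (y::real)} = {t / x<..}"
  by (auto simp: pos_divide_less_eq mult.commute)

lemma prod_surv:
  fixes a1 a2 t :: real assumes a1: "a1 > 0" and a2: "a2 > 0"
  shows "(\<integral>\<^sup>+x. ennreal (beta_density (1 + a1) a2 x) * emeasure (beta_measure 1 a1) {y. t < x * y} \<partial>lborel) = surv (a1 + a2) t"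
proof -
  have B: "Beta (1 + a1) a2 > 0" using Beta_pos'[of "1 + a1" a2] a1 a2 by simp
  interpret P: prob_space "beta_measure (1 + a1) a2" using prob_space_beta[of "1 + a1" a2] a1 a2 by simp
  have step1: "(\<integral>\<^sup>+x. ennreal (beta_density (1 + a1) a2 x) * emeasure (beta_measure 1 a1) {y. t < x * y} \<partial>lborel)
      = (\<integral>\<^sup>+x. ennreal (beta_density (1 + a1) a2 x) * surv a1 (t / x) \<partial>lborel)"
  proof (rule nn_integral_cong)
    fix x :: real
    show "ennreal (beta_density (1 + a1) a2 x) * emeasure (beta_measure 1 a1) {y. t < x * y} =
          ennreal (beta_density (1 + a1) a2 x) * surv a1 (t / x)"
    proof (cases "0 < x \<and> x < 1")
      case True then show ?thesis by (simp add: set_mult_gt surv_beta1[OF a1])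
    next
      case False then show ?thesis by (simp add: beta_density_def)
    qed
  qed
  have total: "(\<integral>\<^sup>+x. ennreal (beta_density (1 + a1) a2 x) \<partial>lborel) = 1"
  proof -
    have "(\<integral>\<^sup>+x. ennreal (beta_density (1 + a1) a2 x) \<partial>lborel) = emeasure (beta_measure (1 + a1) a2) (space (beta_measure (1 + a1) a2))"
      by (simp add: beta_measure_def emeasure_density)
    then show ?thesis using P.emeasure_space_1 by simp
  qed
  show ?thesis
  proof (cases "t < 0")
    case True
    have "(\<integral>\<^sup>+x. ennreal (beta_density (1 + a1) a2 x) * surv a1 (t / x) \<partial>lborel)
        = (\<integral>\<^sup>+x. ennreal (beta_density (1 + a1) a2 x) \<partial>lborel)"
    proof (rule nn_integral_cong)
      fix x :: real
      show "ennreal (beta_density (1 + a1) a2 x) * surv a1 (t / x) = ennreal (beta_density (1 + a1) a2 x)"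
      proof (cases "0 < x")
        case True
        then have "t / x < 0" using \<open>t < 0\<close> by (simp add: divide_neg_pos)
        then show ?thesis by (simp add: surv_def)
      next
        case False then show ?thesis by (simp add: beta_density_def)
      qed
    qed
    then show ?thesis using step1 total True by (simp add: surv_def)
  next
    case False
    show ?thesis
    proof (cases "t < 1")
      case False
      have "(\<lambda>x. ennreal (beta_density (1 + a1) a2 x) * surv a1 (t / x)) = (\<lambda>x. 0)"
      proof
        fix x :: real
        show "ennreal (beta_density (1 + a1) a2 x) * surv a1 (t / x) = 0"
        proof (cases "0 < x \<and> x < 1")
          case True
          then have "t / x \<ge> 1" using False by (simp add: le_divide_eq)
          then show ?thesis by (simp add: surv_def)
        next
          case False then show ?thesis by (simp add: beta_density_def)
        qed
      qed
      then show ?thesis using step1 False \<open>\<not> t < 0\<close> by (simp add: surv_def)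
    next
      case True
      have t: "0 \<le> t" "t < 1" using \<open>\<not> t < 0\<close> True by auto
      have "(\<integral>\<^sup>+x. ennreal (beta_density (1 + a1) a2 x) * surv a1 (t / x) \<partial>lborel)
          = (\<integral>\<^sup>+x. ennreal (1 / Beta (1 + a1) a2) * ennreal (indicator {t<..<1} x * (x - t) powr (1 + a1 - 1) * (1 - x) powr (a2 - 1)) \<partial>lborel)"
      proof (rule nn_integral_cong)
        fix x :: real
        show "ennreal (beta_density (1 + a1) a2 x) * surv a1 (t / x) =
          ennreal (1 / Beta (1 + a1) a2) * ennreal (indicator {t<..<1} x * (x - t) powr (1 + a1 - 1) * (1 - x) powr (a2 - 1))"
        proof (cases "t < x \<and> x < 1")
          case True
          then have x: "0 < x" "x < 1" "t < x" using t by auto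
          have td: "0 \<le> t / x" "t / x < 1" using x t by (auto simp: divide_less_eq)
          have "x powr a1 * (1 - t / x) powr a1 = (x * (1 - t / x)) powr a1" by (simp add: powr_mult)
          also have "x * (1 - t / x) = x - t" using x by (simp add: field_simps)
          finally have e: "x powr a1 * (1 - t / x) powr a1 = (x - t) powr a1" .
          have "beta_density (1 + a1) a2 x * (1 - t / x) powr a1
              = (1 / Beta (1 + a1) a2) * ((x - t) powr a1 * (1 - x) powr (a2 - 1))"
            using x by (simp add: beta_density_def indicator_def e[symmetric] field_simps)
          then show ?thesis using x td B
            by (simp add: surv_def indicator_def ennreal_mult'[symmetric] ennreal_mult''[symmetric])
        next
          case False
          show ?thesis
          proof (cases "0 < x \<and> x < 1")
            case True
            then have "t / x \<ge> 1" using False by (simp add: le_divide_eq)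
            then show ?thesis using False by (simp add: surv_def indicator_def)
          next
            case nx: False
            then show ?thesis using False t by (auto simp: beta_density_def indicator_def)
          qed
        qed
      qed
      also have "\<dots> = ennreal (1 / Beta (1 + a1) a2) * ennreal ((1 - t) powr (1 + a1 + a2 - 1) * Beta (1 + a1) a2)"
      proof -
        have I: "(\<integral>\<^sup>+x. ennreal (indicator {t<..<1} x * (x - t) powr (1 + a1 - 1) * (1 - x) powr (a2 - 1)) \<partial>lborel)
           = ennreal ((1 - t) powr (1 + a1 + a2 - 1) * Beta (1 + a1) a2)"
          by (rule shifted_beta_int) (use a1 a2 t in auto)
        show ?thesis by (subst nn_integral_cmult) (use I in simp_all)
      qed
      also have "\<dots> = ennreal ((1 - t) powr (a1 + a2))"
        using B by (simp add: ennreal_mult'[symmetric])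
      finally show ?thesis using step1 t by (simp add: surv_def)
    qed
  qed
qed

lemma sets_beta_cong[measurable_cong]: "sets (beta_measure a b) = sets borel"
  by simp

lemma core_surv:
  fixes a1 a2 t :: real and N :: "'n measure" and X :: "(real \<times> 'n) set"
  assumes a1: "a1 > 0" and a2: "a2 > 0" and N: "sigma_finite_measure N"
    and X: "X \<in> sets (beta_measure (1 + a1) a2 \<Otimes>\<^sub>M N)"
    and sec: "\<And>x. emeasure N (Pair x -` X) = emeasure (beta_measure 1 a1) {y. t < x * y}"
  shows "emeasure (beta_measure (1 + a1) a2 \<Otimes>\<^sub>M N) X = surv (a1 + a2) t"
proof -
  interpret N: sigma_finite_measure N by fact
  have m: "(\<lambda>x. emeasure N (Pair x -` X)) \<in> borel_measurable (beta_measure (1 + a1) a2)"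
    by (rule N.measurable_emeasure_Pair[OF X])
  have m': "(\<lambda>x. emeasure N (Pair x -` X)) \<in> borel_measurable lborel"
    using m by (simp add: measurable_cong_sets[OF _ refl, of "beta_measure (1 + a1) a2" lborel])
  have "emeasure (beta_measure (1 + a1) a2 \<Otimes>\<^sub>M N) X = (\<integral>\<^sup>+x. emeasure N (Pair x -` X) \<partial>beta_measure (1 + a1) a2)"
    by (rule N.emeasure_pair_measure_alt[OF X])
  also have "\<dots> = (\<integral>\<^sup>+x. ennreal (beta_density (1 + a1) a2 x) * emeasure N (Pair x -` X) \<partial>lborel)"
    unfolding beta_measure_def by (rule nn_integral_density) (use m' in auto)
  also have "\<dots> = (\<integral>\<^sup>+x. ennreal (beta_density (1 + a1) a2 x) * emeasure (beta_measure 1 a1) {y. t < x * y} \<partial>lborel)"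
    by (simp add: sec)
  also have "\<dots> = surv (a1 + a2) t" by (rule prod_surv[OF a1 a2])
  finally show ?thesis .
qed

lemma law_a1:
  fixes a1 a2 :: real assumes a1: "a1 > 0" and a2: "a2 > 0"
  shows "distr (beta_measure (1 + a1) a2 \<Otimes>\<^sub>M (beta_measure 1 a1 \<Otimes>\<^sub>M beta_measure 1 a1)) borel
            (\<lambda>(v0, v1, v2). v0 * v1) = beta_measure 1 (a1 + a2)"
proof -
  interpret B0: prob_space "beta_measure (1 + a1) a2" using prob_space_beta[of "1 + a1" a2] a1 a2 by simp
  interpret B1: prob_space "beta_measure 1 a1" using prob_space_beta[of 1 a1] a1 by simp
  interpret B11: pair_prob_space "beta_measure 1 a1" "beta_measure 1 a1" by unfold_locales
  interpret P: pair_prob_space "beta_measure (1 + a1) a2" "beta_measure 1 a1 \<Otimes>\<^sub>M beta_measure 1 a1" by unfold_locales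
  show ?thesis
  proof (rule beta1_ident)
    show "a1 + a2 > 0" using a1 a2 by simp
    show "prob_space (distr (beta_measure (1 + a1) a2 \<Otimes>\<^sub>M (beta_measure 1 a1 \<Otimes>\<^sub>M beta_measure 1 a1)) borel
            (\<lambda>(v0, v1, v2). v0 * v1))"
      by (rule P.prob_space_distr) measurable
    show "sets (distr (beta_measure (1 + a1) a2 \<Otimes>\<^sub>M (beta_measure 1 a1 \<Otimes>\<^sub>M beta_measure 1 a1)) borel
            (\<lambda>(v0, v1, v2). v0 * v1)) = sets borel" by simp
  next
    fix t :: real
    let ?X = "{p :: real \<times> real \<times> real. t < fst p * fst (snd p)}"
    have "{p \<in> space (beta_measure (1 + a1) a2 \<Otimes>\<^sub>M (beta_measure 1 a1 \<Otimes>\<^sub>M beta_measure 1 a1)). t < fst p * fst (snd p)}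
       \<in> sets (beta_measure (1 + a1) a2 \<Otimes>\<^sub>M (beta_measure 1 a1 \<Otimes>\<^sub>M beta_measure 1 a1))"
      by measurable
    then have X: "?X \<in> sets (beta_measure (1 + a1) a2 \<Otimes>\<^sub>M (beta_measure 1 a1 \<Otimes>\<^sub>M beta_measure 1 a1))"
      by (simp add: space_pair_measure)
    have "emeasure (distr (beta_measure (1 + a1) a2 \<Otimes>\<^sub>M (beta_measure 1 a1 \<Otimes>\<^sub>M beta_measure 1 a1)) borel
            (\<lambda>(v0, v1, v2). v0 * v1)) {t<..} = emeasure (beta_measure (1 + a1) a2 \<Otimes>\<^sub>M (beta_measure 1 a1 \<Otimes>\<^sub>M beta_measure 1 a1)) ?X"
      by (subst emeasure_distr) (auto simp: space_pair_measure intro!: arg_cong2[where f=emeasure])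
    also have "\<dots> = surv (a1 + a2) t"
    proof (rule core_surv[OF a1 a2 _ X])
      show "sigma_finite_measure (beta_measure 1 a1 \<Otimes>\<^sub>M beta_measure 1 a1)"
        by (simp add: B11.sigma_finite_measure_axioms)
      fix x :: real
      have "Pair x -` ?X = {y. t < x * y} \<times> UNIV" by auto
      then show "emeasure (beta_measure 1 a1 \<Otimes>\<^sub>M beta_measure 1 a1) (Pair x -` ?X) = emeasure (beta_measure 1 a1) {y. t < x * y}"
        using B1.emeasure_pair_measure_Times[where A="{y. t < x * y}" and B=UNIV and N="beta_measure 1 a1"] B1.emeasure_space_1
        by simp
    qed
    finally show "emeasure (distr (beta_measure (1 + a1) a2 \<Otimes>\<^sub>M (beta_measure 1 a1 \<Otimes>\<^sub>M beta_measure 1 a1)) borel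
            (\<lambda>(v0, v1, v2). v0 * v1)) {t<..} = surv (a1 + a2) t" .
  qed
qed

lemma law_a2:
  fixes a1 a2 :: real assumes a1: "a1 > 0" and a2: "a2 > 0"
  shows "distr (beta_measure (1 + a1) a2 \<Otimes>\<^sub>M (beta_measure 1 a1 \<Otimes>\<^sub>M beta_measure 1 a1)) borel
            (\<lambda>(v0, v1, v2). v0 * v2) = beta_measure 1 (a1 + a2)"
proof -
  interpret B0: prob_space "beta_measure (1 + a1) a2" using prob_space_beta[of "1 + a1" a2] a1 a2 by simp
  interpret B1: prob_space "beta_measure 1 a1" using prob_space_beta[of 1 a1] a1 by simp
  interpret B11: pair_prob_space "beta_measure 1 a1" "beta_measure 1 a1" by unfold_locales
  interpret P: pair_prob_space "beta_measure (1 + a1) a2" "beta_measure 1 a1 \<Otimes>\<^sub>M beta_measure 1 a1" by unfold_locales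
  show ?thesis
  proof (rule beta1_ident)
    show "a1 + a2 > 0" using a1 a2 by simp
    show "prob_space (distr (beta_measure (1 + a1) a2 \<Otimes>\<^sub>M (beta_measure 1 a1 \<Otimes>\<^sub>M beta_measure 1 a1)) borel
            (\<lambda>(v0, v1, v2). v0 * v2))"
      by (rule P.prob_space_distr) measurable
    show "sets (distr (beta_measure (1 + a1) a2 \<Otimes>\<^sub>M (beta_measure 1 a1 \<Otimes>\<^sub>M beta_measure 1 a1)) borel
            (\<lambda>(v0, v1, v2). v0 * v2)) = sets borel" by simp
  next
    fix t :: real
    let ?X = "{p :: real \<times> real \<times> real. t < fst p * snd (snd p)}"
    have "{p \<in> space (beta_measure (1 + a1) a2 \<Otimes>\<^sub>M (beta_measure 1 a1 \<Otimes>\<^sub>M beta_measure 1 a1)). t < fst p * snd (snd p)}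
       \<in> sets (beta_measure (1 + a1) a2 \<Otimes>\<^sub>M (beta_measure 1 a1 \<Otimes>\<^sub>M beta_measure 1 a1))"
      by measurable
    then have X: "?X \<in> sets (beta_measure (1 + a1) a2 \<Otimes>\<^sub>M (beta_measure 1 a1 \<Otimes>\<^sub>M beta_measure 1 a1))"
      by (simp add: space_pair_measure)
    have "emeasure (distr (beta_measure (1 + a1) a2 \<Otimes>\<^sub>M (beta_measure 1 a1 \<Otimes>\<^sub>M beta_measure 1 a1)) borel
            (\<lambda>(v0, v1, v2). v0 * v2)) {t<..} = emeasure (beta_measure (1 + a1) a2 \<Otimes>\<^sub>M (beta_measure 1 a1 \<Otimes>\<^sub>M beta_measure 1 a1)) ?X"
      by (subst emeasure_distr) (auto simp: space_pair_measure intro!: arg_cong2[where f=emeasure])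
    also have "\<dots> = surv (a1 + a2) t"
    proof (rule core_surv[OF a1 a2 _ X])
      show "sigma_finite_measure (beta_measure 1 a1 \<Otimes>\<^sub>M beta_measure 1 a1)"
        by (simp add: B11.sigma_finite_measure_axioms)
      fix x :: real
      have "Pair x -` ?X = UNIV \<times> {y. t < x * y}" by auto
      then show "emeasure (beta_measure 1 a1 \<Otimes>\<^sub>M beta_measure 1 a1) (Pair x -` ?X) = emeasure (beta_measure 1 a1) {y. t < x * y}"
        using B1.emeasure_pair_measure_Times[where B="{y. t < x * y}" and A=UNIV and N="beta_measure 1 a1"] B1.emeasure_space_1
        by simp
    qed
    finally show "emeasure (distr (beta_measure (1 + a1) a2 \<Otimes>\<^sub>M (beta_measure 1 a1 \<Otimes>\<^sub>M beta_measure 1 a1)) borel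
            (\<lambda>(v0, v1, v2). v0 * v2)) {t<..} = surv (a1 + a2) t" .
  qed
qed


lemma law_b1':
  fixes a1 a2 :: real assumes a1: "a1 > 0" and a2: "a2 > 0"
  shows "distr (beta_measure (1 + a1) a2 \<Otimes>\<^sub>M beta_measure 1 a1) borel
            (\<lambda>(x, y). x * y) = beta_measure 1 (a1 + a2)"
proof -
  interpret B0: prob_space "beta_measure (1 + a1) a2" using prob_space_beta[of "1 + a1" a2] a1 a2 by simp
  interpret B1: prob_space "beta_measure 1 a1" using prob_space_beta[of 1 a1] a1 by simp
  interpret P: pair_prob_space "beta_measure (1 + a1) a2" "beta_measure 1 a1" by unfold_locales
  show ?thesis
  proof (rule beta1_ident)
    show "a1 + a2 > 0" using a1 a2 by simp
    show "prob_space (distr (beta_measure (1 + a1) a2 \<Otimes>\<^sub>M beta_measure 1 a1) borel (\<lambda>(x, y). x * y))"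
      by (rule P.prob_space_distr) measurable
    show "sets (distr (beta_measure (1 + a1) a2 \<Otimes>\<^sub>M beta_measure 1 a1) borel (\<lambda>(x, y). x * y)) = sets borel" by simp
  next
    fix t :: real
    let ?X = "{p :: real \<times> real. t < fst p * snd p}"
    have "{p \<in> space (beta_measure (1 + a1) a2 \<Otimes>\<^sub>M beta_measure 1 a1). t < fst p * snd p}
       \<in> sets (beta_measure (1 + a1) a2 \<Otimes>\<^sub>M beta_measure 1 a1)"
      by measurable
    then have X: "?X \<in> sets (beta_measure (1 + a1) a2 \<Otimes>\<^sub>M beta_measure 1 a1)"
      by (simp add: space_pair_measure)
    have "emeasure (distr (beta_measure (1 + a1) a2 \<Otimes>\<^sub>M beta_measure 1 a1) borel (\<lambda>(x, y). x * y)) {t<..}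
        = emeasure (beta_measure (1 + a1) a2 \<Otimes>\<^sub>M beta_measure 1 a1) ?X"
      by (subst emeasure_distr) (auto simp: space_pair_measure intro!: arg_cong2[where f=emeasure])
    also have "\<dots> = surv (a1 + a2) t"
    proof (rule core_surv[OF a1 a2 _ X])
      show "sigma_finite_measure (beta_measure 1 a1)"
        by (simp add: B1.sigma_finite_measure_axioms)
      fix x :: real
      have "Pair x -` ?X = {y. t < x * y}" by auto
      then show "emeasure (beta_measure 1 a1) (Pair x -` ?X) = emeasure (beta_measure 1 a1) {y. t < x * y}"
        by simp
    qed
    finally show "emeasure (distr (beta_measure (1 + a1) a2 \<Otimes>\<^sub>M beta_measure 1 a1) borel (\<lambda>(x, y). x * y)) {t<..}
        = surv (a1 + a2) t" .
  qed
qed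

lemma law_b1:
  fixes a1 a2 :: real assumes a1: "a1 > 0" and a2: "a2 > 0"
  shows "distr (beta_measure 1 a1 \<Otimes>\<^sub>M beta_measure (1 + a1) a2) borel
            (\<lambda>(v0, v1). v0 * v1) = beta_measure 1 (a1 + a2)"
proof -
  interpret B0: prob_space "beta_measure (1 + a1) a2" using prob_space_beta[of "1 + a1" a2] a1 a2 by simp
  interpret B1: prob_space "beta_measure 1 a1" using prob_space_beta[of 1 a1] a1 by simp
  interpret P: pair_prob_space "beta_measure 1 a1" "beta_measure (1 + a1) a2" by unfold_locales
  have "distr (beta_measure 1 a1 \<Otimes>\<^sub>M beta_measure (1 + a1) a2) borel (\<lambda>(v0, v1). v0 * v1)
     = distr (distr (beta_measure (1 + a1) a2 \<Otimes>\<^sub>M beta_measure 1 a1) (beta_measure 1 a1 \<Otimes>\<^sub>M beta_measure (1 + a1) a2) (\<lambda>(x, y). (y, x)))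
         borel (\<lambda>(v0, v1). v0 * v1)"
    by (simp only: P.distr_pair_swap[symmetric])
  also have "\<dots> = distr (beta_measure (1 + a1) a2 \<Otimes>\<^sub>M beta_measure 1 a1) borel (\<lambda>(x, y). x * y)"
    by (subst distr_distr) (auto simp: comp_def case_prod_beta mult.commute intro!: distr_cong)
  also have "\<dots> = beta_measure 1 (a1 + a2)" by (rule law_b1'[OF a1 a2])
  finally show ?thesis .
qed

lemma law_b2:
  fixes a1 a2 :: real assumes a1: "a1 > 0" and a2: "a2 > 0"
  shows "distr (beta_measure 1 a1 \<Otimes>\<^sub>M beta_measure (1 + a1) a2) borel
            (\<lambda>(v0, v1). v0) = beta_measure 1 a1"
proof -
  interpret B0: prob_space "beta_measure (1 + a1) a2" using prob_space_beta[of "1 + a1" a2] a1 a2 by simp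
  interpret B1: prob_space "beta_measure 1 a1" using prob_space_beta[of 1 a1] a1 by simp
  interpret P: pair_prob_space "beta_measure 1 a1" "beta_measure (1 + a1) a2" by unfold_locales
  show ?thesis
  proof (rule beta1_ident)
    show "a1 > 0" using a1 by simp
    show "prob_space (distr (beta_measure 1 a1 \<Otimes>\<^sub>M beta_measure (1 + a1) a2) borel (\<lambda>(v0, v1). v0))"
      by (rule P.prob_space_distr) measurable
    show "sets (distr (beta_measure 1 a1 \<Otimes>\<^sub>M beta_measure (1 + a1) a2) borel (\<lambda>(v0, v1). v0)) = sets borel" by simp
  next
    fix t :: real
    have "emeasure (distr (beta_measure 1 a1 \<Otimes>\<^sub>M beta_measure (1 + a1) a2) borel (\<lambda>(v0, v1). v0)) {t<..}
        = emeasure (beta_measure 1 a1 \<Otimes>\<^sub>M beta_measure (1 + a1) a2) ({t<..} \<times> UNIV)"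
      by (subst emeasure_distr) (auto simp: space_pair_measure intro!: arg_cong2[where f=emeasure])
    also have "\<dots> = emeasure (beta_measure 1 a1) {t<..}"
      using B0.emeasure_pair_measure_Times[where A="{t<..}" and B=UNIV and N="beta_measure 1 a1"] B0.emeasure_space_1
      by simp
    also have "\<dots> = surv a1 t" by (rule surv_beta1[OF a1])
    finally show "emeasure (distr (beta_measure 1 a1 \<Otimes>\<^sub>M beta_measure (1 + a1) a2) borel (\<lambda>(v0, v1). v0)) {t<..}
        = surv a1 t" .
  qed
qed

lemma marginal_DP:
  fixes M :: "'w measure" and Y :: "nat \<Rightarrow> 'w \<Rightarrow> real" and Z :: "nat \<Rightarrow> 'w \<Rightarrow> 'b::topological_space"
    and c :: real and H :: "'b measure"
  assumes M: "prob_space M" and c: "c > 0"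
    and mY: "\<And>k. Y k \<in> borel_measurable M" and mZ: "\<And>k. Z k \<in> borel_measurable M"
    and iY: "prob_space.indep_vars M (\<lambda>_. borel) Y UNIV" and iZ: "prob_space.indep_vars M (\<lambda>_. borel) Z UNIV"
    and lY: "\<And>k. distr M borel (Y k) = beta_measure 1 c" and lZ: "\<And>k. distr M borel (Z k) = H"
    and pair: "distr M ((\<Pi>\<^sub>M k\<in>(UNIV::nat set). (borel::real measure)) \<Otimes>\<^sub>M (\<Pi>\<^sub>M k\<in>(UNIV::nat set). (borel::'b measure)))
            (\<lambda>\<omega>. ((\<lambda>k. Y k \<omega>), (\<lambda>k. Z k \<omega>)))
       = distr M (\<Pi>\<^sub>M k\<in>(UNIV::nat set). (borel::real measure)) (\<lambda>\<omega> k. Y k \<omega>)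
         \<Otimes>\<^sub>M distr M (\<Pi>\<^sub>M k\<in>(UNIV::nat set). (borel::'b measure)) (\<lambda>\<omega> k. Z k \<omega>)"
  shows "distr M (subprob_algebra borel) (\<lambda>\<omega>. discrete_rm (stick_weights (\<lambda>k. Y k \<omega>)) (\<lambda>k. Z k \<omega>)) = DP c H"
proof -
  interpret prob_space M by fact
  have Hp: "prob_space H" using lZ[of 0] mZ[of 0] by (metis prob_space_distr)
  have Hs: "sets H = sets borel" using lZ[of 0] by (metis sets_distr)
  have Bp: "prob_space (beta_measure 1 c)" using prob_space_beta[of 1 c] c by simp
  have j1: "distr M (\<Pi>\<^sub>M k\<in>(UNIV::nat set). (borel::real measure)) (\<lambda>\<omega> k. Y k \<omega>) = (\<Pi>\<^sub>M k\<in>(UNIV::nat set). beta_measure 1 c)"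
    by (rule distr_PiM_indep[OF M Bp _ iY lY mY]) simp
  have j2: "distr M (\<Pi>\<^sub>M k\<in>(UNIV::nat set). (borel::'b measure)) (\<lambda>\<omega> k. Z k \<omega>) = (\<Pi>\<^sub>M k\<in>(UNIV::nat set). H)"
    by (rule distr_PiM_indep[OF M Hp Hs iZ lZ mZ])
  have Xm: "(\<lambda>\<omega>. ((\<lambda>k. Y k \<omega>), (\<lambda>k. Z k \<omega>))) \<in> measurable M ((\<Pi>\<^sub>M k\<in>(UNIV::nat set). (borel::real measure)) \<Otimes>\<^sub>M (\<Pi>\<^sub>M k\<in>(UNIV::nat set). (borel::'b measure)))"
    using mY mZ by (intro measurable_Pair measurable_PiM_single') auto
  have "distr M (subprob_algebra borel) (\<lambda>\<omega>. discrete_rm (stick_weights (\<lambda>k. Y k \<omega>)) (\<lambda>k. Z k \<omega>))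
      = distr M (subprob_algebra borel) (\<lambda>\<omega>. (\<lambda>(s, \<xi>). discrete_rm (stick_weights s) \<xi>) ((\<lambda>k. Y k \<omega>), (\<lambda>k. Z k \<omega>)))"
    by simp
  also have "\<dots> = distr (distr M ((\<Pi>\<^sub>M k\<in>(UNIV::nat set). (borel::real measure)) \<Otimes>\<^sub>M (\<Pi>\<^sub>M k\<in>(UNIV::nat set). (borel::'b measure)))
            (\<lambda>\<omega>. ((\<lambda>k. Y k \<omega>), (\<lambda>k. Z k \<omega>)))) (subprob_algebra borel) (\<lambda>(s, \<xi>). discrete_rm (stick_weights s) \<xi>)"
    by (rule distr_comp_pre[OF Xm g_pre])
  also have "\<dots> = DP c H"
    unfolding pair j1 j2 DP_def ..
  finally show ?thesis .
qed

lemma fst_borel_meas[measurable]: "fst \<in> borel_measurable (borel :: ('c::topological_space \<times> 'd::topological_space) measure)"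
  by (rule borel_measurable_continuous_onI) (rule continuous_on_fst[OF continuous_on_id])

lemma snd_borel_meas[measurable]: "snd \<in> borel_measurable (borel :: ('c::topological_space \<times> 'd::topological_space) measure)"
  by (rule borel_measurable_continuous_onI) (rule continuous_on_snd[OF continuous_on_id])

theorem proposition3:
  fixes M :: "'w measure"
    and G0 :: "('a::polish_space \<times> 'a) measure"
    and \<phi> :: "nat \<Rightarrow> 'w \<Rightarrow> 'a \<times> 'a"
    and S :: "nat \<Rightarrow> 'w \<Rightarrow> real \<times> real"
    and \<alpha>1 \<alpha>2 :: real
  defines "G01 \<equiv> distr G0 borel fst"
    and "G02 \<equiv> distr G0 borel snd"
    and "G1 \<equiv> (\<lambda>\<omega>. discrete_rm (stick_weights (\<lambda>k. fst (S k \<omega>))) (\<lambda>k. fst (\<phi> k \<omega>)))"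
    and "G2 \<equiv> (\<lambda>\<omega>. discrete_rm (stick_weights (\<lambda>k. snd (S k \<omega>))) (\<lambda>k. snd (\<phi> k \<omega>)))"
  assumes M: "prob_space M"
    and G0: "prob_space G0" "sets G0 = sets borel"
    and alpha: "\<alpha>1 > 0" "\<alpha>2 > 0"
    and phi_meas: "\<And>k. \<phi> k \<in> borel_measurable M"
    and S_meas: "\<And>k. S k \<in> borel_measurable M"
    and phi_law: "\<And>k. distr M borel (\<phi> k) = G0"
    and phi_indep: "prob_space.indep_vars M (\<lambda>_. borel) \<phi> UNIV"
    and S_ident: "\<And>k. distr M borel (S k) = distr M borel (S 0)"
    and S_indep: "prob_space.indep_vars M (\<lambda>_. borel) S UNIV"
    and indep_phi_S:
      "prob_space.indep_set M
         (sets (vimage_algebra (space M) (\<lambda>\<omega> k. \<phi> k \<omega>)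
                  (\<Pi>\<^sub>M k\<in>(UNIV::nat set). (borel :: ('a \<times> 'a) measure))))
         (sets (vimage_algebra (space M) (\<lambda>\<omega> k. S k \<omega>)
                  (\<Pi>\<^sub>M k\<in>(UNIV::nat set). (borel :: (real \<times> real) measure))))"
  shows
    "(distr M borel (S 0) =
        distr (beta_measure (1 + \<alpha>1) \<alpha>2 \<Otimes>\<^sub>M (beta_measure 1 \<alpha>1 \<Otimes>\<^sub>M beta_measure 1 \<alpha>1)) borel
              (\<lambda>(v0, v1, v2). (v0 * v1, v0 * v2))
      \<longrightarrow> distr M (subprob_algebra borel) G1 = DP (\<alpha>1 + \<alpha>2) G01
        \<and> distr M (subprob_algebra borel) G2 = DP (\<alpha>1 + \<alpha>2) G02)
   \<and> (distr M borel (S 0) =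
        distr (beta_measure 1 \<alpha>1 \<Otimes>\<^sub>M beta_measure (1 + \<alpha>1) \<alpha>2) borel
              (\<lambda>(v0, v1). (v0 * v1, v0))
      \<longrightarrow> distr M (subprob_algebra borel) G1 = DP (\<alpha>1 + \<alpha>2) G01
        \<and> distr M (subprob_algebra borel) G2 = DP \<alpha>1 G02)"

proof -
  interpret prob_space M by fact
  have G0p: "prob_space G0" by (rule G0(1))
  have gen: "distr M (subprob_algebra borel) (\<lambda>\<omega>. discrete_rm (stick_weights (\<lambda>k. pr1 (S k \<omega>))) (\<lambda>k. pr2 (\<phi> k \<omega>)))
       = DP c (distr G0 borel pr2)"
    if c: "c > 0" and pr1m: "pr1 \<in> borel_measurable (borel :: (real \<times> real) measure)"
      and pr2m: "pr2 \<in> borel_measurable (borel :: ('a \<times> 'a) measure)"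
      and law: "distr (distr M borel (S 0)) borel pr1 = beta_measure 1 c"
    for c and pr1 :: "real \<times> real \<Rightarrow> real" and pr2 :: "'a \<times> 'a \<Rightarrow> 'a"
  proof (rule marginal_DP[OF M c])
    show "(\<lambda>\<omega>. pr1 (S k \<omega>)) \<in> borel_measurable M" for k
      using measurable_compose[OF S_meas pr1m] .
    show "(\<lambda>\<omega>. pr2 (\<phi> k \<omega>)) \<in> borel_measurable M" for k
      using measurable_compose[OF phi_meas pr2m] .
    show "indep_vars (\<lambda>_. borel) (\<lambda>k \<omega>. pr1 (S k \<omega>)) UNIV"
      by (rule indep_vars_compose2[OF S_indep]) (rule pr1m)
    show "indep_vars (\<lambda>_. borel) (\<lambda>k \<omega>. pr2 (\<phi> k \<omega>)) UNIV"
      by (rule indep_vars_compose2[OF phi_indep]) (rule pr2m)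
    show "distr M borel (\<lambda>\<omega>. pr1 (S k \<omega>)) = beta_measure 1 c" for k
    proof -
      have "distr M borel (\<lambda>\<omega>. pr1 (S k \<omega>)) = distr (distr M borel (S k)) borel pr1"
        by (subst distr_distr) (auto simp: comp_def intro: S_meas pr1m)
      then show ?thesis using law S_ident[of k] by simp
    qed
    show "distr M borel (\<lambda>\<omega>. pr2 (\<phi> k \<omega>)) = distr G0 borel pr2" for k
    proof -
      have "distr M borel (\<lambda>\<omega>. pr2 (\<phi> k \<omega>)) = distr (distr M borel (\<phi> k)) borel pr2"
        by (subst distr_distr) (auto simp: comp_def intro: phi_meas pr2m)
      then show ?thesis using phi_law[of k] by simp
    qed
    show "distr M ((\<Pi>\<^sub>M k\<in>(UNIV::nat set). (borel::real measure)) \<Otimes>\<^sub>M (\<Pi>\<^sub>M k\<in>(UNIV::nat set). (borel::'a measure)))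
            (\<lambda>\<omega>. ((\<lambda>k. pr1 (S k \<omega>)), (\<lambda>k. pr2 (\<phi> k \<omega>))))
       = distr M (\<Pi>\<^sub>M k\<in>(UNIV::nat set). (borel::real measure)) (\<lambda>\<omega> k. pr1 (S k \<omega>))
         \<Otimes>\<^sub>M distr M (\<Pi>\<^sub>M k\<in>(UNIV::nat set). (borel::'a measure)) (\<lambda>\<omega> k. pr2 (\<phi> k \<omega>))"
      by (rule pair_law[OF M phi_meas S_meas pr1m pr2m indep_phi_S])
  qed
  have a12: "\<alpha>1 + \<alpha>2 > 0" using alpha by simp
  show ?thesis
  proof (intro conjI impI)
    assume h: "distr M borel (S 0) =
        distr (beta_measure (1 + \<alpha>1) \<alpha>2 \<Otimes>\<^sub>M (beta_measure 1 \<alpha>1 \<Otimes>\<^sub>M beta_measure 1 \<alpha>1)) borel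
              (\<lambda>(v0, v1, v2). (v0 * v1, v0 * v2))"
    have l1: "distr (distr M borel (S 0)) borel fst = beta_measure 1 (\<alpha>1 + \<alpha>2)"
      unfolding h by (subst distr_distr) (auto simp: comp_def case_prod_beta law_a1[OF alpha, unfolded case_prod_beta])
    have l2: "distr (distr M borel (S 0)) borel snd = beta_measure 1 (\<alpha>1 + \<alpha>2)"
      unfolding h by (subst distr_distr) (auto simp: comp_def case_prod_beta law_a2[OF alpha, unfolded case_prod_beta])
    show "distr M (subprob_algebra borel) G1 = DP (\<alpha>1 + \<alpha>2) G01"
      unfolding G1_def G01_def by (rule gen[OF a12 _ _ l1]) measurable
    show "distr M (subprob_algebra borel) G2 = DP (\<alpha>1 + \<alpha>2) G02"
      unfolding G2_def G02_def by (rule gen[OF a12 _ _ l2]) measurable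
  next
    assume h: "distr M borel (S 0) =
        distr (beta_measure 1 \<alpha>1 \<Otimes>\<^sub>M beta_measure (1 + \<alpha>1) \<alpha>2) borel
              (\<lambda>(v0, v1). (v0 * v1, v0))"
    have l1: "distr (distr M borel (S 0)) borel fst = beta_measure 1 (\<alpha>1 + \<alpha>2)"
      unfolding h by (subst distr_distr) (auto simp: comp_def case_prod_beta law_b1[OF alpha, unfolded case_prod_beta])
    have l2: "distr (distr M borel (S 0)) borel snd = beta_measure 1 \<alpha>1"
      unfolding h by (subst distr_distr) (auto simp: comp_def case_prod_beta law_b2[OF alpha, unfolded case_prod_beta])
    show "distr M (subprob_algebra borel) G1 = DP (\<alpha>1 + \<alpha>2) G01"
      unfolding G1_def G01_def by (rule gen[OF a12 _ _ l1]) measurable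
    show "distr M (subprob_algebra borel) G2 = DP \<alpha>1 G02"
      unfolding G2_def G02_def by (rule gen[OF alpha(1) _ _ l2]) measurable
  qed
qed

end
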